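(* In the SSBM of the context, let $V^\perp\in\mathbb R^{n\times(n-k)}$ be any matrix whose columns form an orthonormal basis of the orthogonal complement of the column span of $\Theta$. Then $$\mathcal L_{sym}=\begin{bmatrix}\Theta&V^\perp\end{bmatrix}\begin{pmatrix}\bar C&0\\0&\bar\alpha I_{n-k}\end{pmatrix}\begin{bmatrix}\Theta^\top\\(V^\perp)^\top\end{bmatrix},$$ with $\bar C=\bar\alpha I_k-\bar B$, $\bar\alpha=1+\frac p{\bar d}(1-2\eta)$, and $\bar B\in\mathbb R^{k\times k}$ given by $\bar B_{ii}=\frac{n_ip}{\bar d}(1-2\eta)$ and $\bar B_{ii'}=-\frac{\sqrt{n_in_{i'}}\,p}{\bar d}(1-2\eta)$ for $i\ne i'$.
   Context: SSBM: integers $n\ge2,k\ge2$, $p\in(0,1]$, $\eta\in[0,1/2)$, partition of $[n]$ into nonempty clusters $C_1,\dots,C_k$, $|C_i|=n_i$; edges present independently w.p. $p$, signed $+1$ within and $-1$ across clusters, signs flipped independently w.p. $\eta$. $A$ symmetric signed adjacency (zero diagonal), $\bar D=\mathrm{diag}(|A|\mathbf1)$ the signed degree matrix, $\bar d=p(n-1)$ so that $\mathbb E\bar D=\bar dI_n$. $\Theta_{ji}=1/\sqrt{n_i}$ if $j\in C_i$ else 0. $\mathcal L_{sym}=I-(\mathbb E\bar D)^{-1/2}\mathbb E[A](\mathbb E\bar D)^{-1/2}$. *)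

theory Defs
  imports "Jordan_Normal_Form.Matrix" "HOL-Probability.Probability_Mass_Function"
begin

(* Vertices are 0..<n, clusters are 0..<k; cl j is the cluster of vertex j. *)

definition clsize :: "nat \<Rightarrow> (nat \<Rightarrow> nat) \<Rightarrow> nat \<Rightarrow> nat" where
  "clsize n cl i = card {j. j < n \<and> cl j = i}"

definition ssbm_entry :: "real \<Rightarrow> real \<Rightarrow> (nat \<Rightarrow> nat) \<Rightarrow> nat \<Rightarrow> nat \<Rightarrow> real pmf" where
  "ssbm_entry p eta cl j l =
     do { e \<leftarrow> bernoulli_pmf p; f \<leftarrow> bernoulli_pmf eta;
          let s = (if cl j = cl l then 1 else -1 :: real);
          return_pmf (if e then (if f then - s else s) else 0) }"

definition expA :: "nat \<Rightarrow> real \<Rightarrow> real \<Rightarrow> (nat \<Rightarrow> nat) \<Rightarrow> real mat" where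
  "expA n p eta cl = Matrix.mat n n (\<lambda>(j,l). if j = l then 0
       else measure_pmf.expectation (ssbm_entry p eta cl j l) (\<lambda>x. x))"

definition expD :: "nat \<Rightarrow> real \<Rightarrow> real \<Rightarrow> (nat \<Rightarrow> nat) \<Rightarrow> real mat" where
  "expD n p eta cl = Matrix.mat n n (\<lambda>(j,l). if j = l then
       (\<Sum>m\<in>{0..<n} - {j}. measure_pmf.expectation (ssbm_entry p eta cl j m) (\<lambda>x. \<bar>x\<bar>))
     else 0)"

definition diag_inv_sqrt :: "real mat \<Rightarrow> real mat" where
  "diag_inv_sqrt D = Matrix.mat (dim_row D) (dim_col D)
      (\<lambda>(j,l). if j = l then 1 / sqrt (D $$ (j,j)) else 0)"

definition Lsym :: "nat \<Rightarrow> real \<Rightarrow> real \<Rightarrow> (nat \<Rightarrow> nat) \<Rightarrow> real mat" where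
  "Lsym n p eta cl = 1\<^sub>m n - diag_inv_sqrt (expD n p eta cl) * expA n p eta cl
                               * diag_inv_sqrt (expD n p eta cl)"

definition Theta :: "nat \<Rightarrow> nat \<Rightarrow> (nat \<Rightarrow> nat) \<Rightarrow> real mat" where
  "Theta n k cl = Matrix.mat n k (\<lambda>(j,i). if cl j = i then 1 / sqrt (real (clsize n cl i)) else 0)"

definition col_span :: "real mat \<Rightarrow> real Matrix.vec set" where
  "col_span M = {M *\<^sub>v y | y. y \<in> carrier_vec (dim_col M)}"

definition orth_compl :: "nat \<Rightarrow> real Matrix.vec set \<Rightarrow> real Matrix.vec set" where
  "orth_compl n S = {x \<in> carrier_vec n. \<forall>z \<in> S. scalar_prod z x = 0}"

definition orthonormal_basis_cols :: "real mat \<Rightarrow> real Matrix.vec set \<Rightarrow> bool" where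
  "orthonormal_basis_cols V W \<longleftrightarrow>
     (\<forall>i < dim_col V. \<forall>i' < dim_col V. scalar_prod (col V i) (col V i') = (if i = i' then 1 else 0))
     \<and> col_span V = W"

definition hcat :: "real mat \<Rightarrow> real mat \<Rightarrow> real mat" where
  "hcat A B = four_block_mat A B (0\<^sub>m 0 (dim_col A)) (0\<^sub>m 0 (dim_col B))"

end

theory Submission imports Defs "Jordan_Normal_Form.Determinant" begin
lemma hcat_carrier: "A \<in> carrier_mat n k \<Longrightarrow> B \<in> carrier_mat n m \<Longrightarrow> hcat A B \<in> carrier_mat n (k+m)"
  unfolding hcat_def using four_block_carrier_mat[of A n k "0\<^sub>m 0 m" 0 m] by auto

lemma hcat_index: "A \<in> carrier_mat n k \<Longrightarrow> B \<in> carrier_mat n m \<Longrightarrow> j < n \<Longrightarrow> a < k + m \<Longrightarrow>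
   hcat A B $$ (j,a) = (if a < k then A $$ (j,a) else B $$ (j, a - k))"
  unfolding hcat_def by auto

lemma block_sandwich:
  assumes A: "A \<in> carrier_mat n k" and B: "B \<in> carrier_mat n m"
    and X: "X \<in> carrier_mat k k" and Y: "Y \<in> carrier_mat m m"
  shows "hcat A B * four_block_mat X (0\<^sub>m k m) (0\<^sub>m m k) Y * transpose_mat (hcat A B)
     = A * X * transpose_mat A + B * Y * transpose_mat B" (is "?L = ?R")
proof (rule eq_matI)
  have H: "hcat A B \<in> carrier_mat n (k+m)" by (rule hcat_carrier[OF A B])
  have F: "four_block_mat X (0\<^sub>m k m) (0\<^sub>m m k) Y \<in> carrier_mat (k+m) (k+m)"
    using X Y by auto
  have dc: "dim_col A = k" "dim_col B = m" using A B by auto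
  have z1: "0\<^sub>m 0 k \<in> carrier_mat 0 k" "0\<^sub>m 0 m \<in> carrier_mat 0 m" by auto
  have e1: "hcat A B * four_block_mat X (0\<^sub>m k m) (0\<^sub>m m k) Y
     = four_block_mat (A * X) (B * Y) (0\<^sub>m 0 k) (0\<^sub>m 0 m)"
    unfolding hcat_def dc
    apply (subst mult_four_block_mat[OF A B z1 X zero_carrier_mat zero_carrier_mat Y])
    using A B X Y by simp
  have e2: "transpose_mat (hcat A B) = four_block_mat (transpose_mat A) (0\<^sub>m k 0) (transpose_mat B) (0\<^sub>m m 0)"
    unfolding hcat_def dc
    by (subst transpose_four_block_mat[OF A B z1]) simp
  have AX: "A * X \<in> carrier_mat n k" "B * Y \<in> carrier_mat n m" using A B X Y by auto
  have AT: "transpose_mat A \<in> carrier_mat k n" "transpose_mat B \<in> carrier_mat m n" using A B by auto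
  have e3: "?L = four_block_mat ?R (0\<^sub>m n 0) (0\<^sub>m 0 n) (0\<^sub>m 0 0)"
    unfolding e1 e2
    apply (subst mult_four_block_mat[OF AX z1 AT(1) zero_carrier_mat AT(2) zero_carrier_mat])
    using A B X Y by simp
  fix i j assume i: "i < dim_row ?R" and j: "j < dim_col ?R"
  hence i': "i < n" and j': "j < n" using A B by auto
  show "?L $$ (i,j) = ?R $$ (i,j)"
    unfolding e3 using i j i' j' A B X Y by simp
next
  show "dim_row ?L = dim_row ?R" using A B hcat_carrier[OF A B] by simp
  show "dim_col ?L = dim_col ?R" using A B hcat_carrier[OF A B] by simp
qed
lemma theta_index: "j < n \<Longrightarrow> i < k \<Longrightarrow> Theta n k cl $$ (j,i) =
   (if cl j = i then 1 / sqrt (real (clsize n cl i)) else 0)"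
  unfolding Theta_def by simp

lemma theta_carrier: "Theta n k cl \<in> carrier_mat n k"
  unfolding Theta_def by simp

lemma theta_sand:
  assumes X: "X \<in> carrier_mat k k" and j: "j < n" and l: "l < n"
    and clk: "\<And>j. j < n \<Longrightarrow> cl j < k"
  shows "(Theta n k cl * X * transpose_mat (Theta n k cl)) $$ (j,l)
     = X $$ (cl j, cl l) / (sqrt (real (clsize n cl (cl j))) * sqrt (real (clsize n cl (cl l))))"
proof -
  let ?T = "Theta n k cl"
  have TX: "(?T * X) $$ (j,a) = X $$ (cl j, a) / sqrt (real (clsize n cl (cl j)))" if a: "a < k" for a
  proof -
    have "(?T * X) $$ (j,a) = (\<Sum>i\<in>{0..<k}. ?T $$ (j,i) * X $$ (i,a))"
      using X a j theta_carrier[of n k cl] by (simp add: scalar_prod_def)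
    also have "\<dots> = (\<Sum>i\<in>{0..<k}. if cl j = i then X $$ (i,a) / sqrt (real (clsize n cl i)) else 0)"
      by (rule sum.cong, simp, simp add: theta_index j)
    also have "\<dots> = X $$ (cl j, a) / sqrt (real (clsize n cl (cl j)))"
      using clk[OF j] by (simp add: sum.delta)
    finally show ?thesis .
  qed
  have "(?T * X * transpose_mat ?T) $$ (j,l) = (\<Sum>a\<in>{0..<k}. (?T * X) $$ (j,a) * ?T $$ (l,a))"
    using X j l theta_carrier[of n k cl] by (subst index_mult_mat, auto simp add: scalar_prod_def)
  also have "\<dots> = (\<Sum>a\<in>{0..<k}. if cl l = a then X $$ (cl j, a) / sqrt (real (clsize n cl (cl j))) / sqrt (real (clsize n cl a)) else 0)"
    by (rule sum.cong, simp, simp add: TX theta_index l)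
  also have "\<dots> = X $$ (cl j, cl l) / (sqrt (real (clsize n cl (cl j))) * sqrt (real (clsize n cl (cl l))))"
    using clk[OF l] by (simp add: sum.delta)
  finally show ?thesis .
qed

lemma theta_orth:
  assumes clk: "cl ` {..<n} = {..<k}"
  shows "transpose_mat (Theta n k cl) * Theta n k cl = 1\<^sub>m k"
proof (rule eq_matI)
  let ?T = "Theta n k cl"
  fix a b assume a: "a < dim_row (1\<^sub>m k :: real mat)" and b: "b < dim_col (1\<^sub>m k :: real mat)"
  hence a: "a < k" and b: "b < k" by auto
  have "(transpose_mat ?T * ?T) $$ (a,b) = (\<Sum>j\<in>{0..<n}. ?T $$ (j,a) * ?T $$ (j,b))"
    using a b theta_carrier[of n k cl] by (simp add: scalar_prod_def)
  also have "\<dots> = (\<Sum>j\<in>{0..<n}. if cl j = a then (if a = b then 1 / real (clsize n cl a) else 0) else 0)"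
    by (rule sum.cong, simp, auto simp add: theta_index a b)
  also have "\<dots> = (\<Sum>j\<in>{j \<in> {0..<n}. cl j = a}. (if a = b then 1 / real (clsize n cl a) else 0))"
    by (subst sum.inter_filter, auto)
  also have "\<dots> = real (clsize n cl a) * (if a = b then 1 / real (clsize n cl a) else 0)"
    by (simp add: clsize_def conj_commute)
  also have "\<dots> = (1\<^sub>m k :: real mat) $$ (a,b)"
  proof -
    from a clk obtain j where "j < n" "cl j = a" by (metis imageE lessThan_iff)
    hence "clsize n cl a \<noteq> 0" unfolding clsize_def by auto
    thus ?thesis using a b by auto
  qed
  finally show "(transpose_mat ?T * ?T) $$ (a,b) = (1\<^sub>m k :: real mat) $$ (a,b)" .
qed (auto simp: Theta_def)

lemma bexp:
  assumes "0 \<le> q" "q \<le> 1"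
  shows "measure_pmf.expectation (bernoulli_pmf q \<bind> (\<lambda>f. return_pmf (g f))) (h::real\<Rightarrow>real)
     = h (g True) * q + h (g False) * (1 - q)"
  by (subst pmf_expectation_bind[where A=UNIV], simp, simp, simp, simp add: UNIV_bool assms)

lemma ent_s:
  assumes "0 \<le> p" "p \<le> 1" "0 \<le> eta" "eta \<le> 1"
  shows "measure_pmf.expectation (bernoulli_pmf p \<bind> (\<lambda>e. bernoulli_pmf eta \<bind> (\<lambda>f. return_pmf (if e then (if f then - s else s) else 0)))) h =
    p * (h (- s) * eta + h s * (1 - eta)) + (1 - p) * (h::real\<Rightarrow>real) 0"
  apply (subst pmf_expectation_bind[where A=UNIV])
  apply simp
  apply (simp add: set_bind_pmf)
  apply simp
  apply (simp add: UNIV_bool assms bexp algebra_simps)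
  done

lemma ent:
  assumes "0 \<le> p" "p \<le> 1" "0 \<le> eta" "eta \<le> 1"
  shows "measure_pmf.expectation (ssbm_entry p eta cl j l) (\<lambda>x. x) = p*(1-2*eta)*(if cl j = cl l then 1 else -1)"
    and "measure_pmf.expectation (ssbm_entry p eta cl j l) (\<lambda>x. \<bar>x\<bar>) = p"
  unfolding ssbm_entry_def Let_def
  by (simp_all only: ent_s assms, simp_all add: algebra_simps)

lemma diag_sand:
  assumes A: "(A::real mat) \<in> carrier_mat n n" and j: "j < n" and l: "l < n"
  shows "(Matrix.mat n n (\<lambda>(j,l). if j = l then c else 0) * A * Matrix.mat n n (\<lambda>(j,l). if j = l then c else 0)) $$ (j,l)
     = c * c * A $$ (j,l)"
  using A j l
  apply (subst index_mult_mat, auto simp add: scalar_prod_def)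
  apply (simp add: if_distrib[of "\<lambda>x. x * _"] if_distrib[of "\<lambda>x. _ * x"] sum.delta sum.delta' cong: if_cong)
  done

theorem mainTheorem16:
  fixes n k :: nat and p eta :: real and cl :: "nat \<Rightarrow> nat" and V :: "real mat"
  assumes "n \<ge> 2" and "k \<ge> 2"
    and "0 < p" and "p \<le> 1" and "0 \<le> eta" and "eta < 1/2"
    and "cl ` {..<n} = {..<k}"
    and "V \<in> carrier_mat n (n - k)"
    and "orthonormal_basis_cols V (orth_compl n (col_span (Theta n k cl)))"
  shows
    "let dbar = p * (real n - 1);
         alpha = 1 + p / dbar * (1 - 2 * eta);
         B = Matrix.mat k k (\<lambda>(i,i'). if i = i'
               then real (clsize n cl i) * p / dbar * (1 - 2 * eta)
               else - sqrt (real (clsize n cl i) * real (clsize n cl i')) * p / dbar * (1 - 2 * eta));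
         C = alpha \<cdot>\<^sub>m 1\<^sub>m k - B;
         M = hcat (Theta n k cl) V
     in Lsym n p eta cl
        = M * four_block_mat C (0\<^sub>m k (n - k)) (0\<^sub>m (n - k) k) (alpha \<cdot>\<^sub>m 1\<^sub>m (n - k))
            * transpose_mat M"
proof -
  note n2 = assms(1) and p0 = assms(3) and p1 = assms(4) and e0 = assms(5) and e1 = assms(6)
    and clk = assms(7) and Vc = assms(8) and onb = assms(9)
  define dbar where "dbar = p * (real n - 1)"
  define alpha where "alpha = 1 + p / dbar * (1 - 2 * eta)"
  define B where "B = Matrix.mat k k (\<lambda>(i,i'). if i = i'
               then real (clsize n cl i) * p / dbar * (1 - 2 * eta)
               else - sqrt (real (clsize n cl i) * real (clsize n cl i')) * p / dbar * (1 - 2 * eta))"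
  define C where "C = alpha \<cdot>\<^sub>m 1\<^sub>m k - B"
  define Th where "Th = Theta n k cl"
  define M where "M = hcat Th V"
  define N where "N i = real (clsize n cl i)" for i
  have Th: "Th \<in> carrier_mat n k" unfolding Th_def by (rule theta_carrier)
  have cljk: "cl j < k" if "j < n" for j using clk that by auto
  have kn: "k \<le> n"
  proof -
    have "card (cl ` {..<n}) \<le> card {..<n}" by (rule card_image_le, simp)
    thus ?thesis using clk by simp
  qed
  have Npos: "N i > 0" if "i < k" for i
  proof -
    from that clk obtain j where "j < n" "cl j = i" by (metis imageE lessThan_iff)
    hence "clsize n cl i \<noteq> 0" unfolding clsize_def by auto
    thus ?thesis unfolding N_def by simp
  qed
  have dpos: "dbar > 0" unfolding dbar_def using p0 n2 by simp
  have Bc: "B \<in> carrier_mat k k" unfolding B_def by simp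
  have Cc: "C \<in> carrier_mat k k" unfolding C_def using Bc by (simp add: minus_carrier_mat)
  have Mc: "M \<in> carrier_mat n n" unfolding M_def using hcat_carrier[OF Th Vc] kn by simp
  have colV: "col V i = V *\<^sub>v unit_vec (n-k) i" if "i < n - k" for i
    by (rule eq_vecI, insert Vc that, auto)
  have colT: "col Th a = Th *\<^sub>v unit_vec k a" if "a < k" for a
    by (rule eq_vecI, insert Th that, auto)
  have VT0: "transpose_mat V * Th = 0\<^sub>m (n-k) k"
  proof (rule eq_matI)
    fix i a assume "i < dim_row (0\<^sub>m (n-k) k :: real mat)" "a < dim_col (0\<^sub>m (n-k) k :: real mat)"
    hence i: "i < n - k" and a: "a < k" by auto
    have "col V i \<in> col_span V" unfolding col_span_def using colV[OF i] Vc i by auto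
    hence "col V i \<in> orth_compl n (col_span Th)" using onb unfolding orthonormal_basis_cols_def Th_def by auto
    moreover have "col Th a \<in> col_span Th" unfolding col_span_def using colT[OF a] Th a by auto
    ultimately have "scalar_prod (col Th a) (col V i) = 0" unfolding orth_compl_def by auto
    moreover have "col Th a \<in> carrier_vec n" "col V i \<in> carrier_vec n" using Th Vc carrier_vecI[of "col Th a" n] carrier_vecI[of "col V i" n] by auto
    ultimately have "scalar_prod (col V i) (col Th a) = 0" using comm_scalar_prod[of "col Th a" n "col V i"] by simp
    thus "(transpose_mat V * Th) $$ (i,a) = (0\<^sub>m (n-k) k :: real mat) $$ (i,a)" using i a Vc Th by simp
  qed (insert Vc Th, auto)
  have TV0: "transpose_mat Th * V = 0\<^sub>m k (n-k)"
  proof -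
    have "transpose_mat (transpose_mat V * Th) = transpose_mat Th * V"
      using transpose_mult[of "transpose_mat V" "n-k" n Th k] Vc Th by simp
    thus ?thesis using VT0 by simp
  qed
  have VV1: "transpose_mat V * V = 1\<^sub>m (n-k)"
  proof (rule eq_matI)
    fix i i' assume "i < dim_row (1\<^sub>m (n-k) :: real mat)" "i' < dim_col (1\<^sub>m (n-k) :: real mat)"
    hence i: "i < n - k" and i': "i' < n - k" by auto
    have "scalar_prod (col V i) (col V i') = (if i = i' then 1 else 0)"
      using onb i i' Vc unfolding orthonormal_basis_cols_def by auto
    thus "(transpose_mat V * V) $$ (i,i') = (1\<^sub>m (n-k) :: real mat) $$ (i,i')" using i i' Vc by simp
  qed (insert Vc, auto)
  have TT1: "transpose_mat Th * Th = 1\<^sub>m k" unfolding Th_def by (rule theta_orth[OF clk])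
  have z1: "0\<^sub>m 0 k \<in> carrier_mat 0 k" "0\<^sub>m 0 (n-k) \<in> carrier_mat 0 (n-k)" by auto
  have MTM: "transpose_mat M * M = 1\<^sub>m n"
  proof -
    have dc: "dim_col Th = k" "dim_col V = n - k" using Th Vc by auto
    have e2: "transpose_mat M = four_block_mat (transpose_mat Th) (0\<^sub>m k 0) (transpose_mat V) (0\<^sub>m (n-k) 0)"
      unfolding M_def hcat_def dc by (subst transpose_four_block_mat[OF Th Vc z1]) simp
    have AT: "transpose_mat Th \<in> carrier_mat k n" "transpose_mat V \<in> carrier_mat (n-k) n" using Th Vc by auto
    have "transpose_mat M * M = four_block_mat (1\<^sub>m k) (0\<^sub>m k (n-k)) (0\<^sub>m (n-k) k) (1\<^sub>m (n-k))"
      unfolding e2 unfolding M_def hcat_def dc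
      apply (subst mult_four_block_mat[OF AT(1) zero_carrier_mat AT(2) zero_carrier_mat Th Vc z1])
      using TT1 TV0 VT0 VV1 Th Vc by simp
    also have "\<dots> = 1\<^sub>m n" using kn by simp
    finally show ?thesis .
  qed
  have MMT: "M * transpose_mat M = 1\<^sub>m n"
    by (rule mat_mult_left_right_inverse[OF _ Mc MTM], insert Mc, simp)
  have ThV: "Th * transpose_mat Th + V * transpose_mat V = 1\<^sub>m n"
  proof -
    have "M * four_block_mat (1\<^sub>m k) (0\<^sub>m k (n - k)) (0\<^sub>m (n - k) k) (1\<^sub>m (n - k)) * transpose_mat M
       = Th * 1\<^sub>m k * transpose_mat Th + V * 1\<^sub>m (n-k) * transpose_mat V"
      unfolding M_def by (rule block_sandwich[OF Th Vc], auto)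
    moreover have "M * four_block_mat (1\<^sub>m k) (0\<^sub>m k (n - k)) (0\<^sub>m (n - k) k) (1\<^sub>m (n - k)) = M"
      using Mc kn by simp
    ultimately show ?thesis using MMT Th Vc by simp
  qed
  have RHS: "M * four_block_mat C (0\<^sub>m k (n - k)) (0\<^sub>m (n - k) k) (alpha \<cdot>\<^sub>m 1\<^sub>m (n - k)) * transpose_mat M
     = Th * C * transpose_mat Th + V * (alpha \<cdot>\<^sub>m 1\<^sub>m (n - k)) * transpose_mat V"
    unfolding M_def by (rule block_sandwich[OF Th Vc Cc], auto)
  have Vent: "(V * (alpha \<cdot>\<^sub>m 1\<^sub>m (n - k)) * transpose_mat V) $$ (j,l)
     = alpha * ((if j = l then 1 else 0) - (Th * 1\<^sub>m k * transpose_mat Th) $$ (j,l))" if j: "j < n" and l: "l < n" for j l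
  proof -
    have "V * (alpha \<cdot>\<^sub>m 1\<^sub>m (n - k)) * transpose_mat V = alpha \<cdot>\<^sub>m (V * transpose_mat V)"
    proof -
      have VT: "transpose_mat V \<in> carrier_mat (n-k) n" using Vc by simp
      have "V * (alpha \<cdot>\<^sub>m 1\<^sub>m (n - k)) = alpha \<cdot>\<^sub>m V"
        by (subst mult_smult_distrib[OF Vc one_carrier_mat], insert Vc, simp)
      thus ?thesis using mult_smult_assoc_mat[OF Vc VT] by simp
    qed
    moreover have "(V * transpose_mat V) $$ (j,l) = (1\<^sub>m n :: real mat) $$ (j,l) - (Th * transpose_mat Th) $$ (j,l)"
      using arg_cong[OF ThV, of "\<lambda>X. X $$ (j,l)"] j l Th Vc by simp
    ultimately show ?thesis using j l Th Vc by simp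
  qed
  have Lent: "Lsym n p eta cl $$ (j,l) = (if j = l then 1 else - (p * (1 - 2*eta) * (if cl j = cl l then 1 else -1)) / dbar)"
    if j: "j < n" and l: "l < n" for j l
  proof -
    have ED: "expD n p eta cl = Matrix.mat n n (\<lambda>(j,l). if j = l then dbar else 0)"
    proof (rule eq_matI)
      fix a b assume "a < dim_row (Matrix.mat n n (\<lambda>(j,l). if j = l then dbar else 0))"
        "b < dim_col (Matrix.mat n n (\<lambda>(j,l). if j = l then dbar else 0))"
      hence a: "a < n" and b: "b < n" by auto
      have "card ({0..<n} - {a}) = n - 1" using a by simp
      hence "(\<Sum>m\<in>{0..<n} - {a}. p) = dbar" unfolding dbar_def using n2 by (simp add: of_nat_diff)
      thus "expD n p eta cl $$ (a,b) = Matrix.mat n n (\<lambda>(j,l). if j = l then dbar else 0) $$ (a,b)"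
        unfolding expD_def using a b ent(2)[of p eta] p0 p1 e0 e1 by simp
    qed (auto simp: expD_def)
    have DI: "diag_inv_sqrt (expD n p eta cl) = Matrix.mat n n (\<lambda>(j,l). if j = l then 1 / sqrt dbar else 0)"
      unfolding diag_inv_sqrt_def ED by (rule eq_matI, auto)
    have Ac: "expA n p eta cl \<in> carrier_mat n n" unfolding expA_def by simp
    have "Lsym n p eta cl $$ (j,l) = (if j = l then 1 else 0) - 1 / sqrt dbar * (1 / sqrt dbar) * expA n p eta cl $$ (j,l)"
      unfolding Lsym_def DI using diag_sand[OF Ac j l, of "1 / sqrt dbar"] j l Ac by simp
    also have "\<dots> = (if j = l then 1 else - (p * (1 - 2*eta) * (if cl j = cl l then 1 else -1)) / dbar)"
    proof -
      have E: "expA n p eta cl $$ (j,l) = (if j = l then 0 else p*(1-2*eta)*(if cl j = cl l then 1 else -1))"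
        using j l ent(1)[of p eta cl j l] p0 p1 e0 e1 unfolding expA_def by simp
      have "1 / sqrt dbar * (1 / sqrt dbar) = 1 / dbar" using dpos by (simp add: real_sqrt_mult[symmetric])
      thus ?thesis unfolding E by simp
    qed
    finally show ?thesis .
  qed
  have main: "Lsym n p eta cl = M * four_block_mat C (0\<^sub>m k (n - k)) (0\<^sub>m (n - k) k) (alpha \<cdot>\<^sub>m 1\<^sub>m (n - k)) * transpose_mat M"
    unfolding RHS
  proof (rule eq_matI)
    fix j l assume "j < dim_row (Th * C * transpose_mat Th + V * (alpha \<cdot>\<^sub>m 1\<^sub>m (n - k)) * transpose_mat V)"
      "l < dim_col (Th * C * transpose_mat Th + V * (alpha \<cdot>\<^sub>m 1\<^sub>m (n - k)) * transpose_mat V)"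
    hence j: "j < n" and l: "l < n" using Th Vc by auto
    have cj: "cl j < k" and cl': "cl l < k" using cljk j l by auto
    have sq: "sqrt (N i) * sqrt (N i) = N i" if "i < k" for i using Npos[OF that] by simp
    have "(Th * C * transpose_mat Th + V * (alpha \<cdot>\<^sub>m 1\<^sub>m (n - k)) * transpose_mat V) $$ (j,l)
       = C $$ (cl j, cl l) / (sqrt (N (cl j)) * sqrt (N (cl l)))
         + alpha * ((if j = l then 1 else 0) - (if cl j = cl l then 1 else 0) / (sqrt (N (cl j)) * sqrt (N (cl l))))"
    proof -
      have T1: "(Th * C * transpose_mat Th) $$ (j,l) = C $$ (cl j, cl l) / (sqrt (N (cl j)) * sqrt (N (cl l)))"
        unfolding Th_def N_def by (rule theta_sand[OF Cc j l cljk])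
      have T2: "(Th * 1\<^sub>m k * transpose_mat Th) $$ (j,l) = (if cl j = cl l then 1 else 0) / (sqrt (N (cl j)) * sqrt (N (cl l)))"
        unfolding Th_def N_def using theta_sand[OF one_carrier_mat j l cljk] cj cl' by simp
      have "(Th * C * transpose_mat Th + V * (alpha \<cdot>\<^sub>m 1\<^sub>m (n - k)) * transpose_mat V) $$ (j,l)
         = (Th * C * transpose_mat Th) $$ (j,l) + (V * (alpha \<cdot>\<^sub>m 1\<^sub>m (n - k)) * transpose_mat V) $$ (j,l)"
        using j l Th Vc Cc by simp
      thus ?thesis unfolding T1 Vent[OF j l] T2 .
    qed
    also have "\<dots> = (if j = l then 1 else - (p * (1 - 2*eta) * (if cl j = cl l then 1 else -1)) / dbar)"
    proof (cases "cl j = cl l")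
      case True
      have Cv: "C $$ (cl j, cl l) = alpha - N (cl j) * p / dbar * (1 - 2 * eta)"
        using True cj Bc unfolding C_def by (simp add: B_def N_def)
      have np: "N (cl j) \<noteq> 0" using Npos[OF cj] by simp
      show ?thesis unfolding Cv using True sq[OF cj] np dpos
        by (cases "j = l") (simp_all add: alpha_def field_simps)
    next
      case False
      then have "j \<noteq> l" by auto
      have Cv: "C $$ (cl j, cl l) = sqrt (N (cl j) * N (cl l)) * p / dbar * (1 - 2 * eta)"
        using False cj cl' Bc unfolding C_def by (simp add: B_def N_def)
      have np: "sqrt (N (cl j)) * sqrt (N (cl l)) \<noteq> 0" using Npos[OF cj] Npos[OF cl'] by simp
      show ?thesis unfolding Cv using False \<open>j \<noteq> l\<close> np dpos
        by (simp add: real_sqrt_mult field_simps)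
    qed
    also have "\<dots> = Lsym n p eta cl $$ (j,l)" using Lent[OF j l] by simp
    finally show "Lsym n p eta cl $$ (j,l) = (Th * C * transpose_mat Th + V * (alpha \<cdot>\<^sub>m 1\<^sub>m (n - k)) * transpose_mat V) $$ (j,l)" by simp
  qed (insert Th Vc, auto simp: Lsym_def expD_def diag_inv_sqrt_def expA_def)
  show ?thesis unfolding Let_def using main unfolding M_def Th_def C_def B_def alpha_def dbar_def .
qed

end
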